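(* Let $k\ge 0$ be an integer and let $G$ be a graph with $\mu_\alpha(G)\leq k$. Then every internal vertex of $G$ is adjacent to at most $k+1$ leaves.
   Context: All graphs are finite and simple. For a graph $H$, $\alpha(H)$ is the maximum size of an independent set, $i(H)$ the minimum size of an inclusion-maximal independent set, and $\mu_\alpha(H)=\alpha(H)-i(H)$. Let $U$ be the set of vertices of $G$ whose connected component is a complete graph. In $G-U$, vertices of degree $1$ are called leaves and the others are called internal vertices. *)

theory Defs
  imports Main
begin

definition graph :: "'a set \<Rightarrow> ('a \<Rightarrow> 'a \<Rightarrow> bool) \<Rightarrow> bool" where
  "graph V E \<longleftrightarrow> finite V \<and> (\<forall>x y. E x y \<longrightarrow> x \<in> V \<and> y \<in> V)
     \<and> (\<forall>x y. E x y \<longrightarrow> E y x) \<and> (\<forall>x. \<not> E x x)"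

definition indep :: "'a set \<Rightarrow> ('a \<Rightarrow> 'a \<Rightarrow> bool) \<Rightarrow> 'a set \<Rightarrow> bool" where
  "indep V E S \<longleftrightarrow> S \<subseteq> V \<and> (\<forall>x\<in>S. \<forall>y\<in>S. \<not> E x y)"

definition maximal_indep :: "'a set \<Rightarrow> ('a \<Rightarrow> 'a \<Rightarrow> bool) \<Rightarrow> 'a set \<Rightarrow> bool" where
  "maximal_indep V E S \<longleftrightarrow> indep V E S \<and> (\<forall>T. indep V E T \<and> S \<subseteq> T \<longrightarrow> T = S)"

definition alpha :: "'a set \<Rightarrow> ('a \<Rightarrow> 'a \<Rightarrow> bool) \<Rightarrow> nat" where
  "alpha V E = Max (card ` {S. indep V E S})"

definition idom :: "'a set \<Rightarrow> ('a \<Rightarrow> 'a \<Rightarrow> bool) \<Rightarrow> nat" where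
  "idom V E = Min (card ` {S. maximal_indep V E S})"

definition mu_alpha :: "'a set \<Rightarrow> ('a \<Rightarrow> 'a \<Rightarrow> bool) \<Rightarrow> nat" where
  "mu_alpha V E = alpha V E - idom V E"

definition component :: "'a set \<Rightarrow> ('a \<Rightarrow> 'a \<Rightarrow> bool) \<Rightarrow> 'a \<Rightarrow> 'a set" where
  "component V E v = {u. E\<^sup>*\<^sup>* v u}"

definition Ucomp :: "'a set \<Rightarrow> ('a \<Rightarrow> 'a \<Rightarrow> bool) \<Rightarrow> 'a set" where
  "Ucomp V E = {v \<in> V. \<forall>x\<in>component V E v. \<forall>y\<in>component V E v. x \<noteq> y \<longrightarrow> E x y}"

definition degGU :: "'a set \<Rightarrow> ('a \<Rightarrow> 'a \<Rightarrow> bool) \<Rightarrow> 'a \<Rightarrow> nat" where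
  "degGU V E v = card {u \<in> V - Ucomp V E. E v u}"

definition leaf :: "'a set \<Rightarrow> ('a \<Rightarrow> 'a \<Rightarrow> bool) \<Rightarrow> 'a \<Rightarrow> bool" where
  "leaf V E v \<longleftrightarrow> v \<in> V - Ucomp V E \<and> degGU V E v = 1"

definition internal :: "'a set \<Rightarrow> ('a \<Rightarrow> 'a \<Rightarrow> bool) \<Rightarrow> 'a \<Rightarrow> bool" where
  "internal V E v \<longleftrightarrow> v \<in> V - Ucomp V E \<and> degGU V E v \<noteq> 1"

end

theory Submission
  imports Defs
begin

lemma comp_eq:
  assumes sym: "\<forall>x y. E x y \<longrightarrow> E y x" and e: "E u w"
  shows "component V E u = component V E w"
proof -
  have "E\<^sup>*\<^sup>* u x \<longleftrightarrow> E\<^sup>*\<^sup>* w x" for x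
  proof
    assume "E\<^sup>*\<^sup>* u x"
    moreover have "E w u" using sym e by blast
    ultimately show "E\<^sup>*\<^sup>* w x" by (metis converse_rtranclp_into_rtranclp)
  next
    assume "E\<^sup>*\<^sup>* w x"
    with e show "E\<^sup>*\<^sup>* u x" by (metis converse_rtranclp_into_rtranclp)
  qed
  then show ?thesis unfolding component_def by auto
qed

lemma leaf_nbr:
  assumes g: "graph V E" and lf: "leaf V E u" and ev: "E v u" and vU: "v \<notin> Ucomp V E"
    and uw: "E u w"
  shows "w = v"
proof -
  have sym: "\<forall>x y. E x y \<longrightarrow> E y x" using g unfolding graph_def by blast
  have fin: "finite V" using g unfolding graph_def by blast
  have inV: "\<And>x y. E x y \<Longrightarrow> x \<in> V \<and> y \<in> V" using g unfolding graph_def by blast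
  have uU: "u \<notin> Ucomp V E" "u \<in> V" using lf unfolding leaf_def by auto
  have wU: "w \<notin> Ucomp V E"
  proof
    assume "w \<in> Ucomp V E"
    then have "u \<in> Ucomp V E" using comp_eq[OF sym uw, of V] inV[OF uw] unfolding Ucomp_def by auto
    with uU show False by simp
  qed
  let ?A = "{x \<in> V - Ucomp V E. E u x}"
  have c: "card ?A = 1" using lf unfolding leaf_def degGU_def by simp
  have "v \<in> ?A" using vU inV[OF ev] sym ev by auto
  moreover have "w \<in> ?A" using wU inV[OF uw] uw by auto
  ultimately show ?thesis using c by (metis card_1_singletonE singletonD)
qed

theorem lemma5:
  fixes V :: "'a set" and E :: "'a \<Rightarrow> 'a \<Rightarrow> bool" and k :: nat and v :: 'a
  assumes "graph V E"
    and "mu_alpha V E \<le> k"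
    and "internal V E v"
  shows "card {u. leaf V E u \<and> E v u} \<le> k + 1"
proof -
  note g = assms(1)
  have sym: "\<forall>x y. E x y \<longrightarrow> E y x" using g unfolding graph_def by blast
  have fin: "finite V" using g unfolding graph_def by blast
  have irr: "\<And>x. \<not> E x x" using g unfolding graph_def by blast
  have inV: "\<And>x y. E x y \<Longrightarrow> x \<in> V \<and> y \<in> V" using g unfolding graph_def by blast
  have vV: "v \<in> V" and vU: "v \<notin> Ucomp V E" using assms(3) unfolding internal_def by auto
  define L where "L = {u. leaf V E u \<and> E v u}"
  have LV: "L \<subseteq> V" unfolding L_def leaf_def by auto
  have finL: "finite L" using LV fin finite_subset by blast
  define F where "F = {S. indep V E S \<and> v \<in> S}"
  have finF: "finite F" unfolding F_def indep_def using fin by (simp add: finite_subset)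
  have "{v} \<in> F" unfolding F_def indep_def using vV irr by auto
  then have "F \<noteq> {}" by blast
  from finite_has_maximal[OF finF this] obtain M where MF: "M \<in> F"
    and Mmax: "\<forall>b\<in>F. M \<subseteq> b \<longrightarrow> M = b" by blast
  have Mind: "indep V E M" and vM: "v \<in> M" using MF unfolding F_def by auto
  have Mmi: "maximal_indep V E M"
    unfolding maximal_indep_def using Mind Mmax vM unfolding F_def by blast
  have finM: "finite M" using Mind fin unfolding indep_def by (meson finite_subset)
  define T where "T = (M - {v}) \<union> L"
  have nb: "\<And>u w. u \<in> L \<Longrightarrow> E u w \<Longrightarrow> w = v"
    using leaf_nbr[OF g _ _ vU] unfolding L_def by blast
  have Tind: "indep V E T"
    unfolding indep_def T_def
  proof (intro conjI ballI)
    show "M - {v} \<union> L \<subseteq> V" using Mind LV unfolding indep_def by auto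
  next
    fix x y assume x: "x \<in> M - {v} \<union> L" and y: "y \<in> M - {v} \<union> L"
    show "\<not> E x y"
    proof
      assume exy: "E x y"
      show False
      proof (cases "x \<in> L")
        case True
        then have "y = v" using nb exy by blast
        with y have "y \<in> L" by auto
        then show False using \<open>y = v\<close> L_def irr by auto
      next
        case False
        then have xM: "x \<in> M - {v}" using x by auto
        show ?thesis
        proof (cases "y \<in> L")
          case True
          then have "x = v" using nb exy sym by blast
          with xM show False by auto
        next
          case False
          then have "y \<in> M" using y by auto
          with xM Mind exy show False unfolding indep_def by auto
        qed
      qed
    qed
  qed
  have disj: "(M - {v}) \<inter> L = {}"
  proof (rule ccontr)
    assume "(M - {v}) \<inter> L \<noteq> {}"
    then obtain x where "x \<in> M" "x \<in> L" by auto
    then have "E v x" unfolding L_def by auto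
    with \<open>x \<in> M\<close> vM Mind show False unfolding indep_def by auto
  qed
  have cT: "card T = card M - 1 + card L"
    unfolding T_def using card_Un_disjoint[OF _ finL disj] finM vM by simp
  have finI: "finite {S. indep V E S}"
    using fin unfolding indep_def by (simp add: finite_subset)
  have "card T \<le> alpha V E" unfolding alpha_def using Tind finI by (simp add: Max_ge)
  moreover have finMI: "finite {S. maximal_indep V E S}"
    using finI unfolding maximal_indep_def by (simp add: finite_subset)
  have "idom V E \<le> card M" unfolding idom_def using Mmi finMI by (simp add: Min_le)
  moreover have "card M \<ge> 1" using finM vM by (metis card_0_eq empty_iff less_one not_less)
  ultimately have "card L \<le> alpha V E - idom V E + 1" using cT by linarith
  then show ?thesis using assms(2) unfolding mu_alpha_def L_def by linarith
qed

end
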